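(* Let $R$ be a commutative Noetherian local ring and $M,N$ finitely generated $R$-modules with $\underline{\mathrm{ann}}_R(M)\subseteq\underline{\mathrm{ann}}_R(N)$. If $M\in\mathcal E(R)$, then $M\oplus N\in\mathcal E(R)$. In particular, if $M\in\mathcal E(R)$ then $M\oplus M^*\in\mathcal E(R)$, where $M^*=\mathrm{Hom}_R(M,R)$.
   Context: All modules are finitely generated. $\underline{\mathrm{ann}}_R(M)=\mathrm{ann}_R\underline{\mathrm{End}}_R(M)$, where $\underline{\mathrm{End}}_R(M)$ is $\mathrm{End}_R(M)$ modulo endomorphisms factoring through a free module. $\mathrm{ARann}_R(M)=\bigcap_{i>0}\mathrm{ann}_R\mathrm{Ext}^i_R(M,M\oplus R)$. $\mathcal{E}(R)$ is the full subcategory of modules $M$ with $\underline{\mathrm{ann}}_R(M)=\mathrm{ARann}_R(M)$. *)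

theory Defs
  imports Complex_Main "HOL-Library.Product_Plus"
begin

definition is_ideal :: "'r::comm_ring_1 set \<Rightarrow> bool" where
  "is_ideal I \<longleftrightarrow> 0 \<in> I \<and> (\<forall>a\<in>I. \<forall>b\<in>I. a + b \<in> I) \<and> (\<forall>r. \<forall>a\<in>I. r * a \<in> I)"

definition maximal_ideal :: "'r::comm_ring_1 set \<Rightarrow> bool" where
  "maximal_ideal P \<longleftrightarrow> is_ideal P \<and> P \<noteq> UNIV \<and>
     (\<forall>J. is_ideal J \<and> P \<subseteq> J \<longrightarrow> J = P \<or> J = UNIV)"

text \<open>Noetherian: every ideal is finitely generated (the ideal generated by S is the
  span of S in R regarded as a module over itself).\<close>
definition noetherian_ring :: "'r::comm_ring_1 itself \<Rightarrow> bool" where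
  "noetherian_ring _ \<longleftrightarrow>
     (\<forall>I::'r set. is_ideal I \<longrightarrow> (\<exists>S. finite S \<and> I = module.span ((*)::'r\<Rightarrow>'r\<Rightarrow>'r) S))"

definition local_ring :: "'r::comm_ring_1 itself \<Rightarrow> bool" where
  "local_ring _ \<longleftrightarrow> (\<exists>!P::'r set. maximal_ideal P)"

definition fin_gen :: "('r::comm_ring_1 \<Rightarrow> 'm::ab_group_add \<Rightarrow> 'm) \<Rightarrow> bool" where
  "fin_gen s \<longleftrightarrow> module s \<and> (\<exists>S. finite S \<and> module.span s S = UNIV)"

definition dsum_scale ::
  "('r::comm_ring_1 \<Rightarrow> 'm::ab_group_add \<Rightarrow> 'm) \<Rightarrow> ('r \<Rightarrow> 'n::ab_group_add \<Rightarrow> 'n) \<Rightarrow> 'r \<Rightarrow> 'm \<times> 'n \<Rightarrow> 'm \<times> 'n" where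
  "dsum_scale s1 s2 r x = (s1 r (fst x), s2 r (snd x))"

text \<open>r annihilates the stable endomorphism ring iff for every endomorphism f of M,
  r f factors through a (finitely generated) free module R^n, i.e. r f = \<beta> \<circ> \<alpha>
  with \<alpha> = (a_0,...,a_{n-1}) : M \<rightarrow> R^n and \<beta>(e_j) = h_j.\<close>
definition stable_ann :: "('r::comm_ring_1 \<Rightarrow> 'm::ab_group_add \<Rightarrow> 'm) \<Rightarrow> 'r set" where
  "stable_ann s = {r. \<forall>f. module_hom s s f \<longrightarrow>
      (\<exists>(n::nat) (a::nat \<Rightarrow> 'm \<Rightarrow> 'r) (h::nat \<Rightarrow> 'm).
         (\<forall>j<n. module_hom s ((*)::'r\<Rightarrow>'r\<Rightarrow>'r) (a j)) \<and>
         (\<forall>x. s r (f x) = (\<Sum>j<n. s (a j x) (h j))))}"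

text \<open>A free resolution of M by finitely generated free modules
  \<dots> \<rightarrow> R^{n 2} \<rightarrow> R^{n 1} \<rightarrow> R^{n 0} \<rightarrow> M \<rightarrow> 0.
  Vectors of R^k are functions nat \<Rightarrow> 'r (only indices < k matter);
  d i (for i \<ge> 1) is the matrix of R^{n i} \<rightarrow> R^{n (i-1)}, entries d i k j with
  k < n (i-1), j < n i; the augmentation sends e_j to g j.\<close>

definition matvec :: "(nat \<Rightarrow> nat \<Rightarrow> 'r::comm_ring_1) \<Rightarrow> nat \<Rightarrow> (nat \<Rightarrow> 'r) \<Rightarrow> nat \<Rightarrow> 'r" where
  "matvec A m b k = (\<Sum>j<m. A k j * b j)"

definition free_resolution ::
  "('r::comm_ring_1 \<Rightarrow> 'm::ab_group_add \<Rightarrow> 'm) \<Rightarrow> (nat \<Rightarrow> nat) \<Rightarrow> (nat \<Rightarrow> nat \<Rightarrow> nat \<Rightarrow> 'r) \<Rightarrow> (nat \<Rightarrow> 'm) \<Rightarrow> bool" where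
  "free_resolution s n d g \<longleftrightarrow>
     \<comment> \<open>augmentation surjective\<close>
     (\<forall>x. \<exists>a. x = (\<Sum>j<n 0. s (a j) (g j))) \<and>
     \<comment> \<open>exactness at R^{n 0}: ker of augmentation = image of d 1\<close>
     (\<forall>a. (\<Sum>j<n 0. s (a j) (g j)) = 0 \<longleftrightarrow>
          (\<exists>b. \<forall>k<n 0. a k = matvec (d 1) (n 1) b k)) \<and>
     \<comment> \<open>exactness at R^{n i}, i \<ge> 1: ker d i = image of d (i+1)\<close>
     (\<forall>i\<ge>1. \<forall>b. (\<forall>k<n (i - 1). matvec (d i) (n i) b k = 0) \<longleftrightarrow>
          (\<exists>c. \<forall>j<n i. b j = matvec (d (i + 1)) (n (i + 1)) c j))"

text \<open>Annihilator of Ext^i_R(M,X), i \<ge> 1, computed from a free resolution: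
  Hom(R^{n i}, X) = X^{n i}; a cochain x is a cocycle iff x \<circ> d (i+1) = 0, and a coboundary iff
  x = y \<circ> d i for some y \<in> X^{n (i-1)}.\<close>
definition ann_Ext_res ::
  "nat \<Rightarrow> (nat \<Rightarrow> nat) \<Rightarrow> (nat \<Rightarrow> nat \<Rightarrow> nat \<Rightarrow> 'r::comm_ring_1) \<Rightarrow> ('r \<Rightarrow> 'x::ab_group_add \<Rightarrow> 'x) \<Rightarrow> 'r set" where
  "ann_Ext_res i n d t = {r. \<forall>x::nat \<Rightarrow> 'x.
      (\<forall>l<n (i + 1). (\<Sum>k<n i. t (d (i + 1) k l) (x k)) = 0) \<longrightarrow>
      (\<exists>y::nat \<Rightarrow> 'x. \<forall>k<n i. t r (x k) = (\<Sum>j<n (i - 1). t (d i j k) (y j)))}"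

text \<open>Ext is independent of the chosen resolution; we take the annihilator as computed
  by any free resolution of M.\<close>
definition ann_Ext ::
  "nat \<Rightarrow> ('r::comm_ring_1 \<Rightarrow> 'm::ab_group_add \<Rightarrow> 'm) \<Rightarrow> ('r \<Rightarrow> 'x::ab_group_add \<Rightarrow> 'x) \<Rightarrow> 'r set" where
  "ann_Ext i s t = {r. \<forall>n d g. free_resolution s n d g \<longrightarrow> r \<in> ann_Ext_res i n d t}"

definition ARann :: "('r::comm_ring_1 \<Rightarrow> 'm::ab_group_add \<Rightarrow> 'm) \<Rightarrow> 'r set" where
  "ARann s = (\<Inter>i\<in>{i. i > 0}. ann_Ext i s (dsum_scale s ((*)::'r\<Rightarrow>'r\<Rightarrow>'r)))"

definition in_E :: "('r::comm_ring_1 \<Rightarrow> 'm::ab_group_add \<Rightarrow> 'm) \<Rightarrow> bool" where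
  "in_E s \<longleftrightarrow> stable_ann s = ARann s"

text \<open>D (with scalar multiplication sD) is isomorphic to M^* = Hom_R(M,R) via \<phi>,
  where Hom_R(M,R) carries the pointwise structure (r f)(x) = r * f x.\<close>
definition is_dual_via ::
  "('r::comm_ring_1 \<Rightarrow> 'm::ab_group_add \<Rightarrow> 'm) \<Rightarrow> ('r \<Rightarrow> 'd::ab_group_add \<Rightarrow> 'd) \<Rightarrow> ('d \<Rightarrow> 'm \<Rightarrow> 'r) \<Rightarrow> bool" where
  "is_dual_via s sD \<phi> \<longleftrightarrow>
     bij_betw \<phi> UNIV {f. module_hom s ((*)::'r\<Rightarrow>'r\<Rightarrow>'r) f} \<and>
     (\<forall>a b x. \<phi> (a + b) x = \<phi> a x + \<phi> b x) \<and>
     (\<forall>r a x. \<phi> (sD r a) x = r * \<phi> a x)"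

end

theory Submission
  imports Defs
begin
lemma module_times: "module ((*)::'r::comm_ring_1\<Rightarrow>'r\<Rightarrow>'r)"
  by unfold_locales (auto simp: algebra_simps)

lemma module_dsum: "module s1 \<Longrightarrow> module s2 \<Longrightarrow> module (dsum_scale s1 s2)"
  unfolding dsum_scale_def module_def
  by (auto simp: prod_eq_iff)

lemma sum_split_add: "(\<Sum>j<a+(b::nat). f j) = (\<Sum>j<a. f j) + (\<Sum>j<b. f (a+j))"
  by (induct b) (auto simp: add.assoc)

lemma (in module) sum_scale_swap:
  "(\<Sum>j<m. c j *s (\<Sum>q<p. e j q *s x q)) = (\<Sum>q<p. (\<Sum>j<m. c j * e j q) *s x q)"
  by (simp add: scale_sum_right scale_sum_left sum.swap[of _ "{..<m}"])

definition mm :: "(nat\<Rightarrow>nat\<Rightarrow>'r::comm_ring_1) \<Rightarrow> nat \<Rightarrow> (nat\<Rightarrow>nat\<Rightarrow>'r) \<Rightarrow> nat\<Rightarrow>nat\<Rightarrow>'r" where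
  "mm A m B i k = (\<Sum>j<m. A i j * B j k)"

lemma mv_mm: "matvec A m (matvec B p v) i = matvec (mm A m B) p v i"
  unfolding matvec_def mm_def
  by (simp add: sum_distrib_left sum_distrib_right mult.assoc sum.swap[of _ "{..<m}"])

lemma matvec_cong: "(\<And>j. j<m \<Longrightarrow> v j = w j) \<Longrightarrow> matvec A m v i = matvec A m w i"
  unfolding matvec_def by (rule sum.cong) auto

lemma matvec_zero: "(\<And>j. j<m \<Longrightarrow> v j = 0) \<Longrightarrow> matvec A m v i = 0"
  unfolding matvec_def by (rule sum.neutral) auto

lemma matvec_unit: "l<m \<Longrightarrow> matvec A m (\<lambda>j. if j = l then 1 else 0) i = A i l"
  unfolding matvec_def by (simp add: if_distrib cong: if_cong)

lemma matvec_expand: "matvec A m w i = (\<Sum>l<m. w l * A i l)"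
  unfolding matvec_def by (simp add: mult.commute)

lemma sum_delta_mult: "j < (N::nat) \<Longrightarrow> (\<Sum>l<N. w l * (r * (if j = l then 1 else 0))) = r * (w j::'a::comm_ring_1)"
proof -
  assume j: "j < N"
  have "(\<Sum>l<N. w l * (r * (if j = l then 1 else 0))) = (\<Sum>l<N. if l = j then r * w l else 0)"
    by (rule sum.cong) auto
  also have "\<dots> = r * w j" using j by (subst sum.delta) auto
  finally show ?thesis .
qed

lemma lift:
  assumes "\<forall>l<N. \<exists>c. \<forall>j<M. u l j = matvec D K c j"
  shows "\<exists>T. \<forall>w. \<forall>j<M. matvec D K (matvec T N w) j = (\<Sum>l<N. w l * u l j)"
proof -
  from assms obtain c where c: "\<forall>l<N. \<forall>j<M. u l j = matvec D K (c l) j" by metis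
  define T where "T = (\<lambda>i l. c l i)"
  show ?thesis
  proof (intro exI allI impI)
    fix w j assume j: "j < M"
    have "matvec D K (matvec T N w) j = matvec (mm D K T) N w j" by (rule mv_mm)
    also have "\<dots> = (\<Sum>l<N. w l * mm D K T j l)" by (rule matvec_expand)
    also have "\<dots> = (\<Sum>l<N. w l * u l j)"
      by (rule sum.cong) (auto simp: mm_def T_def c j matvec_def)
    finally show "matvec D K (matvec T N w) j = (\<Sum>l<N. w l * u l j)" .
  qed
qed

lemma hom_lc:
  fixes m :: nat
  assumes "module_hom s ((*)::'r::comm_ring_1\<Rightarrow>'r\<Rightarrow>'r) a"
  shows "a (\<Sum>j<m. s (x j) (g j)) = (\<Sum>j<m. x j * a (g j))"
proof (induct m)
  case 0 then show ?case using assms module_hom.zero by fastforce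
next
  case (Suc m) then show ?case using assms by (simp add: module_hom_iff)
qed

lemma res_surj: "free_resolution s n d g \<Longrightarrow> \<exists>a. x = (\<Sum>j<n 0. s (a j) (g j))"
  unfolding free_resolution_def by blast

lemma res_F0: "free_resolution s n d g \<Longrightarrow> (\<Sum>j<n 0. s (matvec (d 1) (n 1) b j) (g j)) = 0"
  unfolding free_resolution_def by blast

lemma res_E0: "free_resolution s n d g \<Longrightarrow> (\<Sum>j<n 0. s (a j) (g j)) = 0 \<Longrightarrow>
   \<exists>b. \<forall>k<n 0. a k = matvec (d 1) (n 1) b k"
  unfolding free_resolution_def by blast

lemma res_Fi: "free_resolution s n d g \<Longrightarrow> j < n k \<Longrightarrow>
   matvec (d (Suc k)) (n (Suc k)) (matvec (d (Suc (Suc k))) (n (Suc (Suc k))) c) j = 0"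
proof -
  assume r: "free_resolution s n d g" and j: "j < n k"
  have "\<forall>b. (\<forall>j<n k. matvec (d (Suc k)) (n (Suc k)) b j = 0) \<longleftrightarrow>
          (\<exists>c. \<forall>j<n (Suc k). b j = matvec (d (Suc (Suc k))) (n (Suc (Suc k))) c j)"
  proof -
    have "\<forall>i\<ge>1. \<forall>b. (\<forall>k<n (i - 1). matvec (d i) (n i) b k = 0) \<longleftrightarrow>
          (\<exists>c. \<forall>j<n i. b j = matvec (d (i + 1)) (n (i + 1)) c j)"
      using r unfolding free_resolution_def by blast
    from spec[OF this, of "Suc k"] show ?thesis by simp
  qed
  then show ?thesis using j by blast
qed

lemma res_Ei: "free_resolution s n d g \<Longrightarrow> (\<forall>j<n k. matvec (d (Suc k)) (n (Suc k)) b j = 0) \<Longrightarrow>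
   \<exists>c. \<forall>j<n (Suc k). b j = matvec (d (Suc (Suc k))) (n (Suc (Suc k))) c j"
proof -
  assume r: "free_resolution s n d g" and h: "\<forall>j<n k. matvec (d (Suc k)) (n (Suc k)) b j = 0"
  have "\<forall>b. (\<forall>j<n k. matvec (d (Suc k)) (n (Suc k)) b j = 0) \<longleftrightarrow>
          (\<exists>c. \<forall>j<n (Suc k). b j = matvec (d (Suc (Suc k))) (n (Suc (Suc k))) c j)"
  proof -
    have "\<forall>i\<ge>1. \<forall>b. (\<forall>k<n (i - 1). matvec (d i) (n i) b k = 0) \<longleftrightarrow>
          (\<exists>c. \<forall>j<n i. b j = matvec (d (i + 1)) (n (i + 1)) c j)"
      using r unfolding free_resolution_def by blast
    from spec[OF this, of "Suc k"] show ?thesis by simp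
  qed
  then show ?thesis using h by blast
qed

definition VInv :: "(nat \<Rightarrow> nat) \<Rightarrow> (nat \<Rightarrow> nat \<Rightarrow> nat \<Rightarrow> 'r::comm_ring_1) \<Rightarrow> 'r \<Rightarrow> nat \<Rightarrow> (nat \<Rightarrow> nat \<Rightarrow> 'r) \<Rightarrow> bool" where
  "VInv n d r k S \<longleftrightarrow> (\<forall>v. \<forall>l<n k. matvec (d (Suc k)) (n (Suc k)) (matvec S (n k) (matvec (d (Suc k)) (n (Suc k)) v)) l
      = r * matvec (d (Suc k)) (n (Suc k)) v l)"

lemma homotopy_step:
  assumes res: "free_resolution s n d g" and inv: "VInv n d r k S"
  shows "\<exists>T. (\<forall>w. \<forall>j<n (Suc k). matvec (d (Suc (Suc k))) (n (Suc (Suc k))) (matvec T (n (Suc k)) w) j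
            = r * w j - matvec S (n k) (matvec (d (Suc k)) (n (Suc k)) w) j) \<and> VInv n d r (Suc k) T"
proof -
  define D where "D = d (Suc k)"
  define D2 where "D2 = d (Suc (Suc k))"
  define u where "u = (\<lambda>l j. r * (if j = l then 1 else 0) - mm S (n k) D j l)"
  have ex: "\<forall>l<n (Suc k). \<exists>c. \<forall>j<n (Suc k). u l j = matvec D2 (n (Suc (Suc k))) c j"
  proof (intro allI impI)
    fix l assume l: "l < n (Suc k)"
    have "\<forall>j<n k. matvec D (n (Suc k)) (u l) j = 0"
    proof (intro allI impI)
      fix j assume j: "j < n k"
      have "matvec D (n (Suc k)) (u l) j = r * matvec D (n (Suc k)) (\<lambda>j. if j = l then 1 else 0) j
          - matvec D (n (Suc k)) (\<lambda>j. mm S (n k) D j l) j"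
        unfolding u_def matvec_def by (simp add: algebra_simps sum_subtractf sum_distrib_left)
      also have "matvec D (n (Suc k)) (\<lambda>j. mm S (n k) D j l) j
          = matvec D (n (Suc k)) (matvec S (n k) (matvec D (n (Suc k)) (\<lambda>j. if j = l then 1 else 0))) j"
        by (rule matvec_cong) (simp add: mv_mm matvec_unit l)
      also have "\<dots> = r * matvec D (n (Suc k)) (\<lambda>j. if j = l then 1 else 0) j"
        using inv j unfolding VInv_def D_def by blast
      finally show "matvec D (n (Suc k)) (u l) j = 0" by simp
    qed
    then show "\<exists>c. \<forall>j<n (Suc k). u l j = matvec D2 (n (Suc (Suc k))) c j"
      using res_Ei[OF res] unfolding D_def D2_def by blast
  qed
  from lift[OF ex] obtain T where T: "\<forall>w. \<forall>j<n (Suc k). matvec D2 (n (Suc (Suc k))) (matvec T (n (Suc k)) w) j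
      = (\<Sum>l<n (Suc k). w l * u l j)" by blast
  have A: "\<forall>w. \<forall>j<n (Suc k). matvec D2 (n (Suc (Suc k))) (matvec T (n (Suc k)) w) j
            = r * w j - matvec S (n k) (matvec D (n (Suc k)) w) j"
  proof (intro allI impI)
    fix w j assume j: "j < n (Suc k)"
    have "(\<Sum>l<n (Suc k). w l * u l j) = (\<Sum>l<n (Suc k). w l * (r * (if j = l then 1 else 0)))
        - (\<Sum>l<n (Suc k). w l * mm S (n k) D j l)"
      unfolding u_def by (simp add: algebra_simps sum_subtractf)
    also have "\<dots> = r * w j - matvec S (n k) (matvec D (n (Suc k)) w) j"
      using j by (simp add: sum_delta_mult mv_mm matvec_expand[of "mm S (n k) D"])
    finally show "matvec D2 (n (Suc (Suc k))) (matvec T (n (Suc k)) w) j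
            = r * w j - matvec S (n k) (matvec D (n (Suc k)) w) j" using T j by simp
  qed
  have B: "VInv n d r (Suc k) T"
    unfolding VInv_def
  proof (intro allI impI)
    fix v l assume l: "l < n (Suc k)"
    define x where "x = matvec D2 (n (Suc (Suc k))) v"
    have z: "matvec S (n k) (matvec D (n (Suc k)) x) l = 0"
      by (rule matvec_zero) (simp add: x_def D_def D2_def res_Fi[OF res])
    show "matvec (d (Suc (Suc k))) (n (Suc (Suc k))) (matvec T (n (Suc k)) (matvec (d (Suc (Suc k))) (n (Suc (Suc k))) v)) l
       = r * matvec (d (Suc (Suc k))) (n (Suc (Suc k))) v l"
      using A l z unfolding x_def D2_def by simp
  qed
  show ?thesis using A B unfolding D_def D2_def by blast
qed

lemma stable_ann_id:
  assumes "module s" "r \<in> stable_ann s"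
  shows "\<exists>(p::nat) a h. (\<forall>j<p. module_hom s ((*)::'r::comm_ring_1\<Rightarrow>'r\<Rightarrow>'r) (a j)) \<and>
         (\<forall>x. s r x = (\<Sum>j<p. s (a j x) (h j)))"
proof -
  have "module_hom s s id" using assms(1) by (simp add: module_hom_iff)
  then have "\<exists>(p::nat) a h. (\<forall>j<p. module_hom s ((*)::'r::comm_ring_1\<Rightarrow>'r\<Rightarrow>'r) (a j)) \<and>
         (\<forall>x. s r (id x) = (\<Sum>j<p. s (a j x) (h j)))" using assms(2) unfolding stable_ann_def by blast
  then show ?thesis by simp
qed

lemma homotopy_base:
  assumes ms: "module s" and res: "free_resolution s n d g"
    and a: "\<forall>j<(p::nat). module_hom s ((*)::'r::comm_ring_1\<Rightarrow>'r\<Rightarrow>'r) (a j)"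
    and fac: "\<forall>x. s r x = (\<Sum>j<p. s (a j x) (h j))"
  shows "\<exists>S. VInv n d r 0 S"
proof -
  interpret M: module s by fact
  have "\<forall>q. \<exists>c. h q = (\<Sum>l<n 0. s (c l) (g l))" using res_surj[OF res] by blast
  then obtain c where c: "\<And>q. h q = (\<Sum>l<n 0. s (c q l) (g l))" by metis
  define Phi where "Phi = (\<lambda>l' l. \<Sum>q<p. a q (g l) * c q l')"
  define u where "u = (\<lambda>l j. r * (if j = l then 1 else 0) - Phi j l)"
  have ex: "\<forall>l<n 0. \<exists>b. \<forall>j<n 0. u l j = matvec (d 1) (n 1) b j"
  proof (intro allI impI)
    fix l assume l: "l < n 0"
    have e1: "(\<Sum>j<n 0. s (r * (if j = l then 1 else 0)) (g j)) = s r (g l)"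
    proof -
      have "(\<Sum>j<n 0. s (r * (if j = l then 1 else 0)) (g j)) = (\<Sum>j<n 0. if j = l then s r (g j) else 0)"
        by (rule sum.cong) auto
      also have "\<dots> = s r (g l)" using l by (subst sum.delta) auto
      finally show ?thesis .
    qed
    have e2: "(\<Sum>j<n 0. s (Phi j l) (g j)) = s r (g l)"
    proof -
      have "(\<Sum>j<n 0. s (Phi j l) (g j)) = (\<Sum>q<p. s (a q (g l)) (\<Sum>j<n 0. s (c q j) (g j)))"
        unfolding Phi_def using M.sum_scale_swap[where m=p and c="\<lambda>q. a q (g l)" and p="n 0" and e=c and x=g]
        by (simp add: mult.commute)
      also have "\<dots> = s r (g l)" using fac c by simp
      finally show ?thesis .
    qed
    have "(\<Sum>j<n 0. s (u l j) (g j)) = 0"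
      unfolding u_def by (simp add: M.scale_left_diff_distrib sum_subtractf e1 e2)
    then show "\<exists>b. \<forall>j<n 0. u l j = matvec (d 1) (n 1) b j" using res_E0[OF res] by blast
  qed
  from lift[OF ex] obtain S where S: "\<forall>w. \<forall>j<n 0. matvec (d 1) (n 1) (matvec S (n 0) w) j
      = (\<Sum>l<n 0. w l * u l j)" by blast
  have A: "\<forall>w. \<forall>j<n 0. matvec (d 1) (n 1) (matvec S (n 0) w) j = r * w j - matvec Phi (n 0) w j"
  proof (intro allI impI)
    fix w j assume j: "j < n 0"
    have "(\<Sum>l<n 0. w l * u l j) = (\<Sum>l<n 0. w l * (r * (if j = l then 1 else 0)))
        - (\<Sum>l<n 0. w l * Phi j l)"
      unfolding u_def by (simp add: algebra_simps sum_subtractf)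
    also have "\<dots> = r * w j - matvec Phi (n 0) w j"
      using j by (simp add: sum_delta_mult matvec_expand[of Phi])
    finally show "matvec (d 1) (n 1) (matvec S (n 0) w) j = r * w j - matvec Phi (n 0) w j" using S j by simp
  qed
  have "VInv n d r 0 S"
    unfolding VInv_def
  proof (intro allI impI)
    fix v l assume l: "l < n 0"
    define x where "x = matvec (d 1) (n 1) v"
    have ex0: "(\<Sum>j<n 0. s (x j) (g j)) = 0" unfolding x_def by (rule res_F0[OF res])
    have z: "matvec Phi (n 0) x l = 0"
    proof -
      have "matvec Phi (n 0) x l = (\<Sum>q<p. c q l * (\<Sum>j<n 0. x j * a q (g j)))"
        unfolding matvec_def Phi_def
        by (simp add: sum_distrib_left sum_distrib_right sum.swap[of _ "{..<n 0}"] algebra_simps)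
      also have "\<dots> = (\<Sum>q<p. c q l * a q (\<Sum>j<n 0. s (x j) (g j)))"
        using a by (auto intro!: sum.cong simp: hom_lc)
      also have "\<dots> = 0"
      proof (rule sum.neutral, intro ballI)
        fix q assume "q \<in> {..<p}"
        then have "module_hom s (*) (a q)" using a by simp
        then show "c q l * a q (\<Sum>j<n 0. s (x j) (g j)) = 0" using ex0 module_hom.zero by fastforce
      qed
      finally show ?thesis .
    qed
    show "matvec (d (Suc 0)) (n (Suc 0)) (matvec S (n 0) (matvec (d (Suc 0)) (n (Suc 0)) v)) l =
         r * matvec (d (Suc 0)) (n (Suc 0)) v l"
      using A l z unfolding x_def by simp
  qed
  then show ?thesis by blast
qed

lemma homotopy_all:
  assumes "module s" "free_resolution s n d g" "r \<in> stable_ann s"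
  shows "\<exists>S. VInv n d r k S"
proof (induct k)
  case 0 then show ?case using stable_ann_id[OF assms(1,3)] homotopy_base[OF assms(1,2)] by blast
next
  case (Suc k) then show ?case using homotopy_step[OF assms(2)] by blast
qed

lemma stable_ann_sub_res:
  assumes ms: "module s" and mt: "module t" and res: "free_resolution s n d g"
    and r: "r \<in> stable_ann s" and i: "0 < i"
  shows "r \<in> ann_Ext_res i n d t"
proof -
  interpret X: module t by fact
  obtain k where k: "i = Suc k" using i gr0_implies_Suc by blast
  obtain S where S: "VInv n d r k S" using homotopy_all[OF ms res r] by blast
  obtain T where T: "\<forall>w. \<forall>j<n (Suc k). matvec (d (Suc (Suc k))) (n (Suc (Suc k))) (matvec T (n (Suc k)) w) j
            = r * w j - matvec S (n k) (matvec (d (Suc k)) (n (Suc k)) w) j"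
    using homotopy_step[OF res S] by blast
  define D where "D = d (Suc k)"
  define D2 where "D2 = d (Suc (Suc k))"
  have key: "\<And>q q'. q < n (Suc k) \<Longrightarrow> q' < n (Suc k) \<Longrightarrow>
      mm S (n k) D q' q = r * (if q' = q then 1 else 0) - mm D2 (n (Suc (Suc k))) T q' q"
  proof -
    fix q q' assume q: "q < n (Suc k)" and q': "q' < n (Suc k)"
    from T q' have "matvec D2 (n (Suc (Suc k))) (matvec T (n (Suc k)) (\<lambda>j. if j = q then 1 else 0)) q'
        = r * (if q' = q then 1 else 0) - matvec S (n k) (matvec D (n (Suc k)) (\<lambda>j. if j = q then 1 else 0)) q'"
      unfolding D_def D2_def by blast
    then show "mm S (n k) D q' q = r * (if q' = q then 1 else 0) - mm D2 (n (Suc (Suc k))) T q' q"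
      by (simp add: mv_mm matvec_unit q)
  qed
  show ?thesis
    unfolding ann_Ext_res_def mem_Collect_eq k
  proof (intro allI impI)
    fix x
    assume cyc: "\<forall>l<n (Suc k + 1). (\<Sum>ka<n (Suc k). t (d (Suc k + 1) ka l) (x ka)) = 0"
    define y where "y = (\<lambda>j. \<Sum>q<n (Suc k). t (S q j) (x q))"
    show "\<exists>y. \<forall>ka<n (Suc k). t r (x ka) = (\<Sum>j<n (Suc k - 1). t (d (Suc k) j ka) (y j))"
    proof (intro exI allI impI)
      fix q assume q: "q < n (Suc k)"
      have "(\<Sum>j<n (Suc k - 1). t (d (Suc k) j q) (y j)) = (\<Sum>q'<n (Suc k). t (mm S (n k) D q' q) (x q'))"
        unfolding y_def D_def mm_def using X.sum_scale_swap[where m="n k" and c="\<lambda>j. d (Suc k) j q" and p="n (Suc k)" and e="\<lambda>j q. S q j" and x=x]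
        by (simp add: mult.commute)
      also have "\<dots> = (\<Sum>q'<n (Suc k). t (r * (if q' = q then 1 else 0)) (x q'))
          - (\<Sum>q'<n (Suc k). t (mm D2 (n (Suc (Suc k))) T q' q) (x q'))"
        by (simp add: key q X.scale_left_diff_distrib sum_subtractf)
      also have "(\<Sum>q'<n (Suc k). t (r * (if q' = q then 1 else 0)) (x q')) = t r (x q)"
      proof -
        have "(\<Sum>q'<n (Suc k). t (r * (if q' = q then 1 else 0)) (x q')) = (\<Sum>q'<n (Suc k). if q' = q then t r (x q') else 0)"
          by (rule sum.cong) auto
        also have "\<dots> = t r (x q)" using q by (subst sum.delta) auto
        finally show ?thesis .
      qed
      also have "(\<Sum>q'<n (Suc k). t (mm D2 (n (Suc (Suc k))) T q' q) (x q'))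
          = (\<Sum>l<n (Suc (Suc k)). t (T l q) (\<Sum>q'<n (Suc k). t (D2 q' l) (x q')))"
        unfolding mm_def using X.sum_scale_swap[where m="n (Suc (Suc k))" and c="\<lambda>l. T l q" and p="n (Suc k)" and e="\<lambda>l q'. D2 q' l" and x=x]
        by (simp add: mult.commute)
      also have "\<dots> = 0" using cyc unfolding D2_def by simp
      finally show "t r (x q) = (\<Sum>j<n (Suc k - 1). t (d (Suc k) j q) (y j))" by simp
    qed
  qed
qed

lemma stable_ann_sub_ann_Ext:
  assumes "module s" "module t" "0 < i"
  shows "stable_ann s \<subseteq> ann_Ext i s t"
  using stable_ann_sub_res[OF assms(1,2) _ _ assms(3)] unfolding ann_Ext_def by blast

lemma hom_sum_gen:
  fixes p :: nat
  assumes "module_hom s1 s2 f"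
  shows "f (\<Sum>j<p. s1 (c j) (h j)) = (\<Sum>j<p. s2 (c j) (f (h j)))"
proof (induct p)
  case 0 then show ?case using assms module_hom.zero by fastforce
next
  case (Suc p) then show ?case using assms by (simp add: module_hom_iff)
qed

lemma stable_ann_of_fac:
  assumes ms: "module s"
    and a: "\<forall>j<(p::nat). module_hom s ((*)::'r::comm_ring_1\<Rightarrow>'r\<Rightarrow>'r) (a j)"
    and fac: "\<forall>x. s r x = (\<Sum>j<p. s (a j x) (h j))"
  shows "r \<in> stable_ann s"
  unfolding stable_ann_def mem_Collect_eq
proof (intro allI impI)
  fix f assume f: "module_hom s s f"
  have hf: "\<forall>x. s r (f x) = (\<Sum>j<p. s (a j x) (f (h j)))"
  proof
    fix x
    have "s r (f x) = f (s r x)" using f by (simp add: module_hom_iff)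
    also have "\<dots> = (\<Sum>j<p. s (a j x) (f (h j)))" using fac hom_sum_gen[OF f] by simp
    finally show "s r (f x) = (\<Sum>j<p. s (a j x) (f (h j)))" .
  qed
  show "\<exists>(n::nat) a h. (\<forall>j<n. module_hom s (*) (a j)) \<and> (\<forall>x. s r (f x) = (\<Sum>j<n. s (a j x) (h j)))"
  proof (intro exI[where x=p] exI[where x=a] exI[where x="\<lambda>j. f (h j)"] conjI)
    show "\<forall>j<p. module_hom s (*) (a j)" using a .
    show "\<forall>x. s r (f x) = (\<Sum>j<p. s (a j x) (f (h j)))" by (rule hf)
  qed
qed

lemma stable_ann_fac:
  assumes "module s" "r \<in> stable_ann s"
  shows "\<exists>(p::nat) a h. (\<forall>j<p. module_hom s ((*)::'r::comm_ring_1\<Rightarrow>'r\<Rightarrow>'r) (a j)) \<and>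
         (\<forall>x. s r x = (\<Sum>j<p. s (a j x) (h j)))"
proof -
  have "module_hom s s id" using assms(1) by (simp add: module_hom_iff)
  then have "\<exists>(p::nat) a h. (\<forall>j<p. module_hom s ((*)::'r::comm_ring_1\<Rightarrow>'r\<Rightarrow>'r) (a j)) \<and>
         (\<forall>x. s r (id x) = (\<Sum>j<p. s (a j x) (h j)))" using assms(2) unfolding stable_ann_def by blast
  then show ?thesis by simp
qed

lemma stable_ann_dsum:
  assumes m1: "module s1" and m2: "module s2"
    and r1: "r \<in> stable_ann s1" and r2: "r \<in> stable_ann s2"
  shows "r \<in> stable_ann (dsum_scale s1 s2)"
proof -
  interpret M1: module s1 by fact
  interpret M2: module s2 by fact
  have m12: "module (dsum_scale s1 s2)" using module_dsum[OF m1 m2] .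
  have mt: "module ((*)::'a\<Rightarrow>'a\<Rightarrow>'a)" by (rule module_times)
  obtain p a h where a: "\<forall>j<(p::nat). module_hom s1 ((*)::'a\<Rightarrow>'a\<Rightarrow>'a) (a j)"
    and fa: "\<forall>x. s1 r x = (\<Sum>j<p. s1 (a j x) (h j))" using stable_ann_fac[OF m1 r1] by blast
  obtain q b k where b: "\<forall>j<(q::nat). module_hom s2 ((*)::'a\<Rightarrow>'a\<Rightarrow>'a) (b j)"
    and fb: "\<forall>x. s2 r x = (\<Sum>j<q. s2 (b j x) (k j))" using stable_ann_fac[OF m2 r2] by blast
  define A where "A = (\<lambda>j (z::'b\<times>'c). if j < p then a j (fst z) else b (j - p) (snd z))"
  define H where "H = (\<lambda>j. if j < p then (h j, 0) else (0, k (j - p)))"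
  show ?thesis
  proof (rule stable_ann_of_fac[OF m12, of "p+q" A _ H])
    show "\<forall>j<p + q. module_hom (dsum_scale s1 s2) (*) (A j)"
    proof (intro allI impI)
      fix j assume j: "j < p + q"
      show "module_hom (dsum_scale s1 s2) (*) (A j)"
      proof (cases "j < p")
        case True
        then have "module_hom s1 (*) (a j)" using a by simp
        note hh = this
        show ?thesis unfolding module_hom_iff
        proof (intro conjI allI)
          show "module (dsum_scale s1 s2)" by (rule m12)
          show "module ((*)::'a\<Rightarrow>'a\<Rightarrow>'a)" by (rule mt)
          fix x y :: "'b \<times> 'c" and c :: 'a
          show "A j (x + y) = A j x + A j y" using hh True by (simp add: A_def module_hom_iff)
          show "A j (dsum_scale s1 s2 c x) = c * A j x" using hh True by (simp add: A_def module_hom_iff dsum_scale_def)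
        qed
      next
        case False
        then have "module_hom s2 (*) (b (j - p))" using b j by simp
        note hh = this
        show ?thesis unfolding module_hom_iff
        proof (intro conjI allI)
          show "module (dsum_scale s1 s2)" by (rule m12)
          show "module ((*)::'a\<Rightarrow>'a\<Rightarrow>'a)" by (rule mt)
          fix x y :: "'b \<times> 'c" and c :: 'a
          show "A j (x + y) = A j x + A j y" using hh False by (simp add: A_def module_hom_iff)
          show "A j (dsum_scale s1 s2 c x) = c * A j x" using hh False by (simp add: A_def module_hom_iff dsum_scale_def)
        qed
      qed
    qed
    show "\<forall>x. dsum_scale s1 s2 r x = (\<Sum>j<p + q. dsum_scale s1 s2 (A j x) (H j))"
    proof
      fix x :: "'b \<times> 'c"
      have "(\<Sum>j<p + q. dsum_scale s1 s2 (A j x) (H j)) =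
          (\<Sum>j<p. (s1 (a j (fst x)) (h j), 0)) + (\<Sum>j<q. (0, s2 (b j (snd x)) (k j)))"
      proof -
        have e1: "(\<Sum>j<p. dsum_scale s1 s2 (A j x) (H j)) = (\<Sum>j<p. (s1 (a j (fst x)) (h j), 0))"
          by (rule sum.cong) (auto simp: A_def H_def dsum_scale_def)
        have e2: "(\<Sum>j<q. dsum_scale s1 s2 (A (p + j) x) (H (p + j))) = (\<Sum>j<q. (0, s2 (b j (snd x)) (k j)))"
          by (rule sum.cong) (auto simp: A_def H_def dsum_scale_def)
        show ?thesis unfolding sum_split_add e1 e2 ..
      qed
      also have "\<dots> = dsum_scale s1 s2 r x"
      proof -
        have "fst (\<Sum>j<p. (s1 (a j (fst x)) (h j), 0::'c)) = s1 r (fst x)" using fa by (simp add: fst_sum)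
        moreover have "snd (\<Sum>j<q. (0::'b, s2 (b j (snd x)) (k j))) = s2 r (snd x)" using fb by (simp add: snd_sum)
        moreover have "snd (\<Sum>j<p. (s1 (a j (fst x)) (h j), 0::'c)) = 0" by (simp add: snd_sum)
        moreover have "fst (\<Sum>j<q. (0::'b, s2 (b j (snd x)) (k j))) = 0" by (simp add: fst_sum)
        ultimately show ?thesis unfolding dsum_scale_def by (simp add: prod_eq_iff)
      qed
      finally show "dsum_scale s1 s2 r x = (\<Sum>j<p + q. dsum_scale s1 s2 (A j x) (H j))" by simp
    qed
  qed
qed

lemma dual_sum:
  fixes \<phi> :: "'d::ab_group_add \<Rightarrow> 'm \<Rightarrow> 'r::comm_ring_1" and sD :: "'r \<Rightarrow> 'd \<Rightarrow> 'd"
  assumes "\<forall>a b x. \<phi> (a + b) x = \<phi> a x + \<phi> b x" and "\<forall>r a x. \<phi> (sD r a) x = r * \<phi> a x"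
  shows "\<phi> (\<Sum>j<(p::nat). sD (c j) (e j)) x = (\<Sum>j<p. c j * \<phi> (e j) x)"
proof (induct p)
  case 0
  have "\<phi> 0 x = \<phi> (0 + 0) x" by simp
  then have "\<phi> 0 x = \<phi> 0 x + \<phi> 0 x" using assms(1) by metis
  then have "\<phi> 0 x + \<phi> 0 x = \<phi> 0 x + 0" by simp
  then have "\<phi> 0 x = 0" by (rule add_left_imp_eq)
  then show ?case by simp
next
  case (Suc p) then show ?case using assms by simp
qed

lemma stable_ann_dual:
  assumes mM: "module sM" and mD: "module sD" and dual: "is_dual_via sM sD \<phi>"
    and r: "r \<in> stable_ann sM"
  shows "r \<in> stable_ann sD"
proof -
  interpret M: module sM by fact
  interpret D: module sD by fact
  have mt: "module ((*)::'a\<Rightarrow>'a\<Rightarrow>'a)" by (rule module_times)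
  have bij: "bij_betw \<phi> UNIV {f. module_hom sM ((*)::'a\<Rightarrow>'a\<Rightarrow>'a) f}"
    and padd: "\<forall>a b x. \<phi> (a + b) x = \<phi> a x + \<phi> b x"
    and psc: "\<forall>r a x. \<phi> (sD r a) x = r * \<phi> a x" using dual unfolding is_dual_via_def by auto
  obtain p a h where a: "\<forall>j<(p::nat). module_hom sM ((*)::'a\<Rightarrow>'a\<Rightarrow>'a) (a j)"
    and fa: "\<forall>x. sM r x = (\<Sum>j<p. sM (a j x) (h j))" using stable_ann_fac[OF mM r] by blast
  have rng: "\<phi> ` UNIV = {f. module_hom sM ((*)::'a\<Rightarrow>'a\<Rightarrow>'a) f}" using bij by (simp add: bij_betw_def)
  have "\<forall>j. \<exists>e. j < p \<longrightarrow> \<phi> e = a j"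
  proof
    fix j show "\<exists>e. j < p \<longrightarrow> \<phi> e = a j"
    proof (cases "j < p")
      case True then have "a j \<in> \<phi> ` UNIV" using a rng by auto
      then show ?thesis by auto
    next
      case False then show ?thesis by auto
    qed
  qed
  then obtain e where e: "\<And>j. j < p \<Longrightarrow> \<phi> (e j) = a j" by metis
  have hom: "\<And>y. module_hom sM ((*)::'a\<Rightarrow>'a\<Rightarrow>'a) (\<phi> y)"
    using bij unfolding bij_betw_def by auto
  define A where "A = (\<lambda>j y. \<phi> y (h j))"
  show ?thesis
  proof (rule stable_ann_of_fac[OF mD, of p A _ e])
    show "\<forall>j<p. module_hom sD (*) (A j)"
    proof (intro allI impI)
      fix j assume "j < p"
      show "module_hom sD (*) (A j)" unfolding module_hom_iff
      proof (intro conjI allI)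
        show "module sD" by (rule mD)
        show "module ((*)::'a\<Rightarrow>'a\<Rightarrow>'a)" by (rule mt)
        fix x y c
        show "A j (x + y) = A j x + A j y" unfolding A_def using padd by blast
        show "A j (sD c x) = c * A j x" unfolding A_def using psc by blast
      qed
    qed
    show "\<forall>y. sD r y = (\<Sum>j<p. sD (A j y) (e j))"
    proof
      fix y
      have "\<phi> (sD r y) = \<phi> (\<Sum>j<p. sD (A j y) (e j))"
      proof
        fix x
        have "\<phi> (sD r y) x = r * \<phi> y x" using psc by simp
        also have "\<dots> = \<phi> y (sM r x)" using hom[of y] by (simp add: module_hom_iff)
        also have "\<dots> = (\<Sum>j<p. a j x * \<phi> y (h j))" using fa hom_sum_gen[OF hom[of y]] by simp
        also have "\<dots> = (\<Sum>j<p. A j y * \<phi> (e j) x)"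
          unfolding A_def by (rule sum.cong) (auto simp: e mult.commute)
        also have "\<dots> = \<phi> (\<Sum>j<p. sD (A j y) (e j)) x" using dual_sum[OF padd psc] by simp
        finally show "\<phi> (sD r y) x = \<phi> (\<Sum>j<p. sD (A j y) (e j)) x" .
      qed
      then show "sD r y = (\<Sum>j<p. sD (A j y) (e j))"
      proof -
        have "inj \<phi>" using bij by (simp add: bij_betw_def)
        then show ?thesis using \<open>\<phi> (sD r y) = \<phi> (\<Sum>j<p. sD (A j y) (e j))\<close> by (rule injD)
      qed
    qed
  qed
qed

definition blk :: "(nat\<Rightarrow>nat) \<Rightarrow> (nat\<Rightarrow>nat) \<Rightarrow> (nat\<Rightarrow>nat\<Rightarrow>nat\<Rightarrow>'r::comm_ring_1) \<Rightarrow> (nat\<Rightarrow>nat\<Rightarrow>nat\<Rightarrow>'r) \<Rightarrow> nat\<Rightarrow>nat\<Rightarrow>nat\<Rightarrow>'r" where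
  "blk n n' d d' i k j = (if k < n (i - 1) then (if j < n i then d i k j else 0)
      else (if j < n i then 0 else d' i (k - n (i - 1)) (j - n i)))"

lemma blk1: "k < n (i - 1) \<Longrightarrow> matvec (blk n n' d d' i) (n i + n' i) B k = matvec (d i) (n i) B k"
  unfolding matvec_def sum_split_add by (simp add: blk_def)

lemma blk2: "matvec (blk n n' d d' i) (n i + n' i) B (n (i - 1) + k) = matvec (d' i) (n' i) (\<lambda>j. B (n i + j)) k"
  unfolding matvec_def sum_split_add by (simp add: blk_def)

lemma blk_split_zero:
  "(\<forall>k<n (i - 1) + n' (i - 1). matvec (blk n n' d d' i) (n i + n' i) B k = 0) \<longleftrightarrow>
   (\<forall>k<n (i - 1). matvec (d i) (n i) B k = 0) \<and> (\<forall>k<n' (i - 1). matvec (d' i) (n' i) (\<lambda>j. B (n i + j)) k = 0)"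
proof safe
  fix k assume h: "\<forall>k<n (i - 1) + n' (i - 1). matvec (blk n n' d d' i) (n i + n' i) B k = 0"
  { assume k: "k < n (i - 1)" then show "matvec (d i) (n i) B k = 0" using h blk1[of k n i n' d d' B] by simp }
  { assume k: "k < n' (i - 1)" then show "matvec (d' i) (n' i) (\<lambda>j. B (n i + j)) k = 0"
      using h[rule_format, of "n (i - 1) + k"] blk2[of n n' d d' i B k] by simp }
next
  fix k assume h1: "\<forall>k<n (i - 1). matvec (d i) (n i) B k = 0"
    and h2: "\<forall>k<n' (i - 1). matvec (d' i) (n' i) (\<lambda>j. B (n i + j)) k = 0"
    and k: "k < n (i - 1) + n' (i - 1)"
  show "matvec (blk n n' d d' i) (n i + n' i) B k = 0"
  proof (cases "k < n (i - 1)")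
    case True then show ?thesis using h1 blk1[of k n i n' d d' B] by simp
  next
    case False
    then obtain k' where kk: "k = n (i - 1) + k'" by (metis le_add_diff_inverse not_less)
    then have "k' < n' (i - 1)" using k by simp
    then show ?thesis using h2 blk2[of n n' d d' i B k'] kk by simp
  qed
qed

lemma blk_split_img:
  "(\<exists>B. \<forall>k<n (i - 1) + n' (i - 1). a k = matvec (blk n n' d d' i) (n i + n' i) B k) \<longleftrightarrow>
   (\<exists>b1. \<forall>k<n (i - 1). a k = matvec (d i) (n i) b1 k) \<and>
   (\<exists>b2. \<forall>k<n' (i - 1). a (n (i - 1) + k) = matvec (d' i) (n' i) b2 k)"
proof safe
  fix B assume h: "\<forall>k<n (i - 1) + n' (i - 1). a k = matvec (blk n n' d d' i) (n i + n' i) B k"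
  show "\<exists>b1. \<forall>k<n (i - 1). a k = matvec (d i) (n i) b1 k"
  proof (intro exI[of _ B] allI impI)
    fix k assume k: "k < n (i - 1)"
    then show "a k = matvec (d i) (n i) B k" using h blk1[of k n i n' d d' B] by simp
  qed
  show "\<exists>b2. \<forall>k<n' (i - 1). a (n (i - 1) + k) = matvec (d' i) (n' i) b2 k"
  proof (intro exI[of _ "\<lambda>j. B (n i + j)"] allI impI)
    fix k assume k: "k < n' (i - 1)"
    then show "a (n (i - 1) + k) = matvec (d' i) (n' i) (\<lambda>j. B (n i + j)) k"
      using h[rule_format, of "n (i - 1) + k"] blk2[of n n' d d' i B k] by simp
  qed
next
  fix b1 b2 assume h1: "\<forall>k<n (i - 1). a k = matvec (d i) (n i) b1 k"
    and h2: "\<forall>k<n' (i - 1). a (n (i - 1) + k) = matvec (d' i) (n' i) b2 k"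
  define B where "B = (\<lambda>j. if j < n i then b1 j else b2 (j - n i))"
  show "\<exists>B. \<forall>k<n (i - 1) + n' (i - 1). a k = matvec (blk n n' d d' i) (n i + n' i) B k"
  proof (intro exI[of _ B] allI impI)
    fix k assume k: "k < n (i - 1) + n' (i - 1)"
    show "a k = matvec (blk n n' d d' i) (n i + n' i) B k"
    proof (cases "k < n (i - 1)")
      case True
      have "matvec (d i) (n i) B k = matvec (d i) (n i) b1 k" by (rule matvec_cong) (simp add: B_def)
      then show ?thesis using True h1 blk1[of k n i n' d d' B] by simp
    next
      case False
      then obtain k' where kk: "k = n (i - 1) + k'" by (metis le_add_diff_inverse not_less)
      then have "k' < n' (i - 1)" using k by simp
      moreover have "(\<lambda>j. B (n i + j)) = b2" by (simp add: B_def)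
      ultimately show ?thesis using h2 blk2[of n n' d d' i B k'] kk by simp
    qed
  qed
qed

definition gsum :: "(nat \<Rightarrow> nat) \<Rightarrow> (nat \<Rightarrow> 'm::ab_group_add) \<Rightarrow> (nat \<Rightarrow> 'n::ab_group_add) \<Rightarrow> nat \<Rightarrow> 'm \<times> 'n" where
  "gsum n g g' j = (if j < n 0 then (g j, 0) else (0, g' (j - n 0)))"

lemma gsum_lc:
  assumes "module s1" "module s2"
  shows "(\<Sum>j<n 0 + n' 0. dsum_scale s1 s2 (A j) (gsum n g g' j)) =
    (\<Sum>j<n 0. s1 (A j) (g j), \<Sum>j<n' 0. s2 (A (n 0 + j)) (g' j))"
proof -
  interpret M1: module s1 by fact
  interpret M2: module s2 by fact
  have e1: "(\<Sum>j<n 0. dsum_scale s1 s2 (A j) (gsum n g g' j)) = (\<Sum>j<n 0. (s1 (A j) (g j), 0))"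
    by (rule sum.cong) (auto simp: gsum_def dsum_scale_def)
  have e2: "(\<Sum>j<n' 0. dsum_scale s1 s2 (A (n 0 + j)) (gsum n g g' (n 0 + j))) = (\<Sum>j<n' 0. (0, s2 (A (n 0 + j)) (g' j)))"
    by (rule sum.cong) (auto simp: gsum_def dsum_scale_def)
  show ?thesis unfolding sum_split_add e1 e2 by (simp add: prod_eq_iff fst_sum snd_sum)
qed

lemma free_resolution_dsum:
  assumes m1: "module s1" and m2: "module s2"
    and r1: "free_resolution s1 n d g" and r2: "free_resolution s2 n' d' g'"
  shows "free_resolution (dsum_scale s1 s2) (\<lambda>i. n i + n' i) (blk n n' d d') (gsum n g g')"
  unfolding free_resolution_def
proof (intro conjI allI impI)
  fix x :: "'b \<times> 'c"
  obtain a1 where a1: "fst x = (\<Sum>j<n 0. s1 (a1 j) (g j))" using res_surj[OF r1] by blast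
  obtain a2 where a2: "snd x = (\<Sum>j<n' 0. s2 (a2 j) (g' j))" using res_surj[OF r2] by blast
  define A where "A = (\<lambda>j. if j < n 0 then a1 j else a2 (j - n 0))"
  have "(\<Sum>j<n 0 + n' 0. dsum_scale s1 s2 (A j) (gsum n g g' j)) = x"
    unfolding gsum_lc[OF m1 m2] using a1 a2 by (simp add: A_def prod_eq_iff)
  then show "\<exists>a. x = (\<Sum>j<n 0 + n' 0. dsum_scale s1 s2 (a j) (gsum n g g' j))" by metis
next
  fix a
  have ex1: "\<forall>a. (\<Sum>j<n 0. s1 (a j) (g j)) = 0 \<longleftrightarrow> (\<exists>b. \<forall>k<n 0. a k = matvec (d 1) (n 1) b k)"
    using r1 unfolding free_resolution_def by blast
  have ex2: "\<forall>a. (\<Sum>j<n' 0. s2 (a j) (g' j)) = 0 \<longleftrightarrow> (\<exists>b. \<forall>k<n' 0. a k = matvec (d' 1) (n' 1) b k)"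
    using r2 unfolding free_resolution_def by blast
  have "(\<Sum>j<n 0 + n' 0. dsum_scale s1 s2 (a j) (gsum n g g' j)) = 0 \<longleftrightarrow>
      (\<Sum>j<n 0. s1 (a j) (g j)) = 0 \<and> (\<Sum>j<n' 0. s2 (a (n 0 + j)) (g' j)) = 0"
    unfolding gsum_lc[OF m1 m2] by (simp add: zero_prod_def)
  also have "\<dots> \<longleftrightarrow> (\<exists>b. \<forall>k<n 0. a k = matvec (d 1) (n 1) b k) \<and>
      (\<exists>b. \<forall>k<n' 0. a (n 0 + k) = matvec (d' 1) (n' 1) b k)"
    using ex1 ex2[rule_format, of "\<lambda>j. a (n 0 + j)"] by simp
  also have "\<dots> \<longleftrightarrow> (\<exists>b. \<forall>k<n 0 + n' 0. a k = matvec (blk n n' d d' 1) (n 1 + n' 1) b k)"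
    using blk_split_img[where a=a and n=n and i=1 and n'=n' and d=d and d'=d'] by simp
  finally show "(\<Sum>j<n 0 + n' 0. dsum_scale s1 s2 (a j) (gsum n g g' j)) = 0 \<longleftrightarrow>
      (\<exists>b. \<forall>k<n 0 + n' 0. a k = matvec (blk n n' d d' 1) (n 1 + n' 1) b k)" .
next
  fix i :: nat and b assume i: "1 \<le> i"
  have e1: "\<forall>b. (\<forall>k<n (i - 1). matvec (d i) (n i) b k = 0) \<longleftrightarrow>
          (\<exists>c. \<forall>j<n i. b j = matvec (d (i + 1)) (n (i + 1)) c j)"
    using r1 i unfolding free_resolution_def by blast
  have e2: "\<forall>b. (\<forall>k<n' (i - 1). matvec (d' i) (n' i) b k = 0) \<longleftrightarrow>
          (\<exists>c. \<forall>j<n' i. b j = matvec (d' (i + 1)) (n' (i + 1)) c j)"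
    using r2 i unfolding free_resolution_def by blast
  have "(\<forall>k<n (i - 1) + n' (i - 1). matvec (blk n n' d d' i) (n i + n' i) b k = 0) \<longleftrightarrow>
     (\<forall>k<n (i - 1). matvec (d i) (n i) b k = 0) \<and> (\<forall>k<n' (i - 1). matvec (d' i) (n' i) (\<lambda>j. b (n i + j)) k = 0)"
    by (rule blk_split_zero)
  also have "\<dots> \<longleftrightarrow> (\<exists>c. \<forall>j<n i. b j = matvec (d (i + 1)) (n (i + 1)) c j) \<and>
     (\<exists>c. \<forall>j<n' i. b (n i + j) = matvec (d' (i + 1)) (n' (i + 1)) c j)"
    using e1 e2[rule_format, of "\<lambda>j. b (n i + j)"] by simp
  also have "\<dots> \<longleftrightarrow> (\<exists>c. \<forall>j<n i + n' i. b j = matvec (blk n n' d d' (i + 1)) (n (i + 1) + n' (i + 1)) c j)"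
    using blk_split_img[where a=b and n=n and i="i+1" and n'=n' and d=d and d'=d'] by simp
  finally show "(\<forall>k<n (i - 1) + n' (i - 1). matvec (blk n n' d d' i) (n i + n' i) b k = 0) \<longleftrightarrow>
     (\<exists>c. \<forall>j<n i + n' i. b j = matvec (blk n n' d d' (i + 1)) (n (i + 1) + n' (i + 1)) c j)" .
qed

lemma ann_Ext_res_transfer:
  assumes mt: "module t" and mt': "module t'"
    and hi: "module_hom t t' \<iota>" and hp: "module_hom t' t \<pi>" and pi: "\<forall>z. \<pi> (\<iota> z) = z"
    and i: "0 < i"
    and r: "r \<in> ann_Ext_res i (\<lambda>i. n i + n' i) (blk n n' d d') t'"
  shows "r \<in> ann_Ext_res i n d t"
  unfolding ann_Ext_res_def mem_Collect_eq
proof (intro allI impI)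
  interpret X: module t by fact
  interpret X': module t' by fact
  have i0: "\<iota> 0 = 0" using hi module_hom.zero by blast
  fix x
  assume cyc: "\<forall>l<n (i + 1). (\<Sum>k<n i. t (d (i + 1) k l) (x k)) = 0"
  define x' where "x' = (\<lambda>k. if k < n i then \<iota> (x k) else 0)"
  have cyc': "\<forall>l<n (i + 1) + n' (i + 1). (\<Sum>k<n i + n' i. t' (blk n n' d d' (i + 1) k l) (x' k)) = 0"
  proof (intro allI impI)
    fix l
    have s2: "(\<Sum>k<n' i. t' (blk n n' d d' (i + 1) (n i + k) l) (x' (n i + k))) = 0"
      by (rule sum.neutral) (simp add: x'_def)
    have s1: "(\<Sum>k<n i. t' (blk n n' d d' (i + 1) k l) (x' k)) =
        \<iota> (\<Sum>k<n i. t (blk n n' d d' (i + 1) k l) (x k))"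
      using hom_sum_gen[OF hi, where p="n i" and c="\<lambda>k. blk n n' d d' (i + 1) k l" and h=x]
      by (simp add: x'_def)
    have "(\<Sum>k<n i. t (blk n n' d d' (i + 1) k l) (x k)) = 0"
    proof (cases "l < n (i + 1)")
      case True
      have "(\<Sum>k<n i. t (blk n n' d d' (i + 1) k l) (x k)) = (\<Sum>k<n i. t (d (i + 1) k l) (x k))"
        using True by (intro sum.cong) (auto simp: blk_def)
      then show ?thesis using cyc True by simp
    next
      case False
      have F: "\<not> l < n (Suc i)" using False by simp
      show ?thesis by (rule sum.neutral) (auto simp: blk_def F)
    qed
    then show "(\<Sum>k<n i + n' i. t' (blk n n' d d' (i + 1) k l) (x' k)) = 0"
      unfolding sum_split_add using s1 s2 i0 by simp
  qed
  from r cyc' obtain y' where y': "\<forall>k<n i + n' i. t' r (x' k) =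
      (\<Sum>j<n (i - 1) + n' (i - 1). t' (blk n n' d d' i j k) (y' j))"
    unfolding ann_Ext_res_def by blast
  show "\<exists>y. \<forall>k<n i. t r (x k) = (\<Sum>j<n (i - 1). t (d i j k) (y j))"
  proof (intro exI[of _ "\<lambda>j. \<pi> (y' j)"] allI impI)
    fix k assume k: "k < n i"
    have "t r (x k) = \<pi> (t' r (x' k))" using hp pi k by (simp add: x'_def module_hom_iff)
    also have "\<dots> = \<pi> (\<Sum>j<n (i - 1) + n' (i - 1). t' (blk n n' d d' i j k) (y' j))" using y' k by simp
    also have "\<dots> = (\<Sum>j<n (i - 1) + n' (i - 1). t (blk n n' d d' i j k) (\<pi> (y' j)))"
      by (rule hom_sum_gen[OF hp])
    also have "\<dots> = (\<Sum>j<n (i - 1). t (d i j k) (\<pi> (y' j)))"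
    proof -
      have a: "(\<Sum>j<n (i - 1). t (blk n n' d d' i j k) (\<pi> (y' j))) = (\<Sum>j<n (i - 1). t (d i j k) (\<pi> (y' j)))"
        by (rule sum.cong) (auto simp: blk_def k)
      have b: "(\<Sum>j<n' (i - 1). t (blk n n' d d' i (n (i - 1) + j) k) (\<pi> (y' (n (i - 1) + j)))) = 0"
        by (rule sum.neutral) (auto simp: blk_def k)
      show ?thesis unfolding sum_split_add a b by simp
    qed
    finally show "t r (x k) = (\<Sum>j<n (i - 1). t (d i j k) (\<pi> (y' j)))" .
  qed
qed

lemma ann_Ext_dsum_sub:
  assumes m1: "module s1" and m2: "module s2" and mt: "module t" and mt': "module t'"
    and hi: "module_hom t t' \<iota>" and hp: "module_hom t' t \<pi>" and pi: "\<forall>z. \<pi> (\<iota> z) = z"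
    and i: "0 < i" and ex2: "\<exists>n' d' g'. free_resolution s2 n' d' g'"
  shows "ann_Ext i (dsum_scale s1 s2) t' \<subseteq> ann_Ext i s1 t"
proof
  fix r assume r: "r \<in> ann_Ext i (dsum_scale s1 s2) t'"
  obtain n' d' g' where r2: "free_resolution s2 n' d' g'" using ex2 by blast
  show "r \<in> ann_Ext i s1 t"
    unfolding ann_Ext_def mem_Collect_eq
  proof (intro allI impI)
    fix n d g assume r1: "free_resolution s1 n d g"
    have "free_resolution (dsum_scale s1 s2) (\<lambda>i. n i + n' i) (blk n n' d d') (gsum n g g')"
      by (rule free_resolution_dsum[OF m1 m2 r1 r2])
    then have "r \<in> ann_Ext_res i (\<lambda>i. n i + n' i) (blk n n' d d') t'"
      using r unfolding ann_Ext_def by blast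
    then show "r \<in> ann_Ext_res i n d t" by (rule ann_Ext_res_transfer[OF mt mt' hi hp pi i])
  qed
qed

definition subm :: "(nat \<Rightarrow> 'r::comm_ring_1) set \<Rightarrow> bool" where
  "subm V \<longleftrightarrow> (\<lambda>_. 0) \<in> V \<and> (\<forall>a\<in>V. \<forall>b\<in>V. (\<lambda>i. a i + b i) \<in> V) \<and> (\<forall>c. \<forall>a\<in>V. (\<lambda>i. c * a i) \<in> V)"

definition gens :: "nat \<Rightarrow> (nat \<Rightarrow> 'r::comm_ring_1) set \<Rightarrow> nat \<Rightarrow> (nat \<Rightarrow> nat \<Rightarrow> 'r) \<Rightarrow> bool" where
  "gens k V m c \<longleftrightarrow> (\<forall>a\<in>V. \<exists>b. \<forall>i<k. a i = matvec c m b i) \<and> (\<forall>j<m. \<exists>a\<in>V. \<forall>i<k. c i j = a i)"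

lemma subm_lc:
  assumes V: "subm V" and w: "\<forall>q<p. w q \<in> V"
  shows "(\<lambda>i. \<Sum>q<(p::nat). b q * w q i) \<in> V"
  using w
proof (induct p)
  case 0 then show ?case using V by (simp add: subm_def)
next
  case (Suc p)
  then have "(\<lambda>i. \<Sum>q<p. b q * w q i) \<in> V" "(\<lambda>i. b p * w p i) \<in> V" using V by (auto simp: subm_def)
  then show ?case using V by (simp add: subm_def)
qed

lemma subm_diff:
  assumes V: "subm V" and "a \<in> V" "b \<in> V"
  shows "(\<lambda>i. a i - b i) \<in> V"
proof -
  have "(\<lambda>i. (-1) * b i) \<in> V" using V assms(3) unfolding subm_def by blast
  note neg = this
  have "\<forall>x\<in>V. \<forall>y\<in>V. (\<lambda>i. x i + y i) \<in> V" using V by (simp add: subm_def)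
  from this[rule_format, OF assms(2) neg] show ?thesis by simp
qed

lemma enum_finite:
  assumes "finite S"
  shows "\<exists>(p::nat) e. S = e ` {..<p} \<and> inj_on e {..<p}"
  using finite_imp_nat_seg_image_inj_on[OF assms] by (simp add: lessThan_def)

lemma ideal_span_enum:
  assumes "finite S" "z \<in> module.span ((*)::'r::comm_ring_1\<Rightarrow>'r\<Rightarrow>'r) S"
    and "S = e ` {..<p}" "inj_on e {..<(p::nat)}"
  shows "\<exists>\<beta>. z = (\<Sum>q<p. \<beta> q * e q)"
proof -
  from assms(2) module.span_finite[OF module_times assms(1)] obtain u where u: "z = (\<Sum>v\<in>S. u v * v)" by auto
  show ?thesis
  proof (rule exI[of _ "\<lambda>q. u (e q)"])
    show "z = (\<Sum>q<p. u (e q) * e q)" using u assms(3,4) by (simp add: sum.reindex)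
  qed
qed

lemma noeth_gens:
  fixes V :: "(nat \<Rightarrow> 'r::comm_ring_1) set"
  assumes noeth: "noetherian_ring TYPE('r)" and V: "subm V"
  shows "\<exists>m c. gens k V m c"
  using V
proof (induct k arbitrary: V)
  case 0 then show ?case unfolding gens_def by (intro exI[of _ 0]) auto
next
  case (Suc k)
  have V: "subm V" by fact
  define V' where "V' = {a \<in> V. a k = 0}"
  have "subm V'" using V unfolding V'_def subm_def by auto
  then obtain m' c' where g': "gens k V' m' c'" using Suc.hyps by blast
  define I where "I = (\<lambda>a. a k) ` V"
  have "is_ideal I" using V unfolding is_ideal_def I_def subm_def by (auto simp: image_iff)
  then obtain S where S: "finite S" "I = module.span ((*)::'r\<Rightarrow>'r\<Rightarrow>'r) S"
    using noeth unfolding noetherian_ring_def by blast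
  obtain p :: nat and e where pe: "S = e ` {..<p}" "inj_on e {..<p}" using enum_finite[OF S(1)] by blast
  have "\<forall>q. \<exists>w. q < p \<longrightarrow> w \<in> V \<and> w k = e q"
  proof
    fix q show "\<exists>w. q < p \<longrightarrow> w \<in> V \<and> w k = e q"
    proof (cases "q < p")
      case True
      then have "e q \<in> S" using pe(1) by auto
      then have "e q \<in> I" using S(2) by (simp add: module.span_base[OF module_times])
      then show ?thesis unfolding I_def by auto
    qed auto
  qed
  from choice[OF this] obtain w where w0: "\<forall>q. q < p \<longrightarrow> w q \<in> V \<and> w q k = e q" by (elim exE)
  then have w: "\<And>q. q < p \<Longrightarrow> w q \<in> V" "\<And>q. q < p \<Longrightarrow> w q k = e q" by auto
  define c where "c = (\<lambda>i j. if j < m' then (if i = k then 0 else c' i j) else w (j - m') i)"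
  have "gens (Suc k) V (m' + p) c"
    unfolding gens_def
  proof (intro conjI ballI allI impI)
    fix a assume a: "a \<in> V"
    then have "a k \<in> I" unfolding I_def by auto
    then obtain \<beta> where \<beta>: "a k = (\<Sum>q<p. \<beta> q * e q)" using ideal_span_enum[OF S(1) _ pe] S(2) by blast
    define a' where "a' = (\<lambda>i. a i - (\<Sum>q<p. \<beta> q * w q i))"
    have "a' \<in> V" unfolding a'_def using subm_diff[OF V a subm_lc[OF V]] w(1) by blast
    moreover have "a' k = 0" unfolding a'_def \<beta> using w(2) by simp
    ultimately have "a' \<in> V'" unfolding V'_def by simp
    then obtain b' where b': "\<forall>i<k. a' i = matvec c' m' b' i" using g' unfolding gens_def by blast
    define b where "b = (\<lambda>j. if j < m' then b' j else \<beta> (j - m'))"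
    have mv: "matvec c (m' + p) b i = (\<Sum>j<m'. c i j * b' j) + (\<Sum>q<p. w q i * \<beta> q)" for i
      unfolding matvec_def sum_split_add by (simp add: c_def b_def)
    show "\<exists>b. \<forall>i<Suc k. a i = matvec c (m' + p) b i"
    proof (intro exI[of _ b] allI impI)
      fix i assume i: "i < Suc k"
      show "a i = matvec c (m' + p) b i"
      proof (cases "i = k")
        case True
        then show ?thesis unfolding mv using \<beta> w(2) by (simp add: c_def mult.commute)
      next
        case False
        then have ik: "i < k" using i by simp
        have "(\<Sum>j<m'. c i j * b' j) = a' i" using b' ik False by (simp add: c_def matvec_def)
        then show ?thesis unfolding mv a'_def by (simp add: mult.commute)
      qed
    qed
  next
    fix j assume j: "j < m' + p"
    show "\<exists>a\<in>V. \<forall>i<Suc k. c i j = a i"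
    proof (cases "j < m'")
      case True
      then obtain a where a: "a \<in> V'" "\<forall>i<k. c' i j = a i" using g' unfolding gens_def by blast
      then show ?thesis using True unfolding V'_def c_def
        by (intro bexI[of _ a]) (auto simp: less_Suc_eq)
    next
      case False
      then have "j - m' < p" using j by simp
      then show ?thesis using False w(1) unfolding c_def by (intro bexI[of _ "w (j - m')"]) auto
    qed
  qed
  then show ?case by blast
qed

lemma gens_exact:
  assumes V: "subm V" and cl: "\<And>a a'. a \<in> V \<Longrightarrow> (\<forall>i<k. a i = a' i) \<Longrightarrow> a' \<in> V"
    and g: "gens k V m c"
  shows "a \<in> V \<longleftrightarrow> (\<exists>b. \<forall>i<k. a i = matvec c m b i)"
proof
  assume "a \<in> V" then show "\<exists>b. \<forall>i<k. a i = matvec c m b i" using g unfolding gens_def by blast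
next
  assume "\<exists>b. \<forall>i<k. a i = matvec c m b i"
  then obtain b where b: "\<forall>i<k. a i = matvec c m b i" by blast
  have "\<forall>j. \<exists>v. j < m \<longrightarrow> v \<in> V \<and> (\<forall>i<k. c i j = v i)" using g unfolding gens_def by blast
  from choice[OF this] obtain v where v0: "\<forall>j. j < m \<longrightarrow> v j \<in> V \<and> (\<forall>i<k. c i j = v j i)" by (elim exE)
  then have v: "\<And>j. j < m \<Longrightarrow> v j \<in> V" "\<And>j i. j < m \<Longrightarrow> i < k \<Longrightarrow> c i j = v j i" by auto
  have z: "(\<lambda>i. \<Sum>j<m. b j * v j i) \<in> V" using subm_lc[OF V] v(1) by blast
  have "\<forall>i<k. (\<Sum>j<m. b j * v j i) = a i"
    using b v(2) by (simp add: matvec_def mult.commute)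
  then show "a \<in> V" using cl[OF z] by simp
qed

definition Ker :: "nat \<Rightarrow> nat \<Rightarrow> (nat \<Rightarrow> nat \<Rightarrow> 'r::comm_ring_1) \<Rightarrow> (nat \<Rightarrow> 'r) set" where
  "Ker rows cols M = {b. \<forall>k<rows. matvec M cols b k = 0}"

lemma subm_Ker: "subm (Ker rows cols M)"
proof -
  have z: "\<And>k. matvec M cols (\<lambda>_. 0) k = 0" by (simp add: matvec_def)
  have ad: "\<And>a b k. matvec M cols (\<lambda>i. a i + b i) k = matvec M cols a k + matvec M cols b k"
    by (simp add: matvec_def distrib_left sum.distrib)
  have sc: "\<And>c a k. matvec M cols (\<lambda>i. c * a i) k = c * matvec M cols a k"
    by (simp add: matvec_def sum_distrib_left mult.left_commute)
  show ?thesis unfolding subm_def Ker_def using z ad sc by auto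
qed

lemma Ker_cl: "a \<in> Ker rows cols M \<Longrightarrow> (\<forall>i<cols. a i = a' i) \<Longrightarrow> a' \<in> Ker rows cols M"
proof -
  assume a: "a \<in> Ker rows cols M" and h: "\<forall>i<cols. a i = a' i"
  have "\<And>k. matvec M cols a k = matvec M cols a' k" using h by (intro matvec_cong) auto
  then show ?thesis using a unfolding Ker_def by simp
qed

lemma fin_gen_enum:
  assumes "fin_gen s"
  shows "\<exists>(n0::nat) g. \<forall>x. \<exists>a. x = (\<Sum>j<n0. s (a j) (g j))"
proof -
  from assms obtain S where ms: "module s" and S: "finite S" "module.span s S = UNIV"
    unfolding fin_gen_def by blast
  obtain p :: nat and e where pe: "S = e ` {..<p}" "inj_on e {..<p}" using enum_finite[OF S(1)] by blast
  have "\<forall>x. \<exists>a. x = (\<Sum>j<p. s (a j) (e j))"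
  proof
    fix x
    have "x \<in> module.span s S" using S(2) by simp
    then obtain u where u: "x = (\<Sum>v\<in>S. s (u v) v)" using module.span_finite[OF ms S(1)] by auto
    show "\<exists>a. x = (\<Sum>j<p. s (a j) (e j))"
    proof (rule exI[of _ "\<lambda>j. u (e j)"])
      show "x = (\<Sum>j<p. s (u (e j)) (e j))" using u pe by (simp add: sum.reindex)
    qed
  qed
  then show ?thesis by blast
qed

lemma fin_gen_res:
  fixes s :: "'r::comm_ring_1 \<Rightarrow> 'm::ab_group_add \<Rightarrow> 'm"
  assumes noeth: "noetherian_ring TYPE('r)" and fg: "fin_gen s"
  shows "\<exists>n d g. free_resolution s n d g"
proof -
  have ms: "module s" using fg unfolding fin_gen_def by blast
  interpret M: module s by fact
  obtain n0 :: nat and g where surj: "\<forall>x. \<exists>a. x = (\<Sum>j<n0. s (a j) (g j))" using fin_gen_enum[OF fg] by blast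
  define K0 where "K0 = {a::nat\<Rightarrow>'r. (\<Sum>j<n0. s (a j) (g j)) = 0}"
  have ad: "\<And>a b. (\<Sum>j<n0. s (a j + b j) (g j)) = (\<Sum>j<n0. s (a j) (g j)) + (\<Sum>j<n0. s (b j) (g j))"
    by (simp add: M.scale_left_distrib sum.distrib)
  have sc: "\<And>c a. (\<Sum>j<n0. s (c * a j) (g j)) = s c (\<Sum>j<n0. s (a j) (g j))"
    by (simp add: M.scale_sum_right)
  have sK0: "subm K0" unfolding subm_def K0_def using ad sc by auto
  have clK0: "\<And>a a'. a \<in> K0 \<Longrightarrow> (\<forall>i<n0. a i = a' i) \<Longrightarrow> a' \<in> K0"
  proof -
    fix a a' assume a: "a \<in> K0" and h: "\<forall>i<n0. a i = (a' i::'r)"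
    have "(\<Sum>j<n0. s (a j) (g j)) = (\<Sum>j<n0. s (a' j) (g j))" using h by (intro sum.cong) auto
    then show "a' \<in> K0" using a unfolding K0_def by simp
  qed
  obtain m1 c1 where g1: "gens n0 K0 m1 c1" using noeth_gens[OF noeth sK0] by blast
  define P where "P = (\<lambda>(i::nat) (x::nat \<times> nat \<times> (nat \<Rightarrow> nat \<Rightarrow> 'r)). i = 0 \<longrightarrow> x = (n0, m1, c1))"
  define Q where "Q = (\<lambda>(i::nat) (x::nat \<times> nat \<times> (nat \<Rightarrow> nat \<Rightarrow> 'r)) (y::nat \<times> nat \<times> (nat \<Rightarrow> nat \<Rightarrow> 'r)).
      fst y = fst (snd x) \<and> gens (fst (snd x)) (Ker (fst x) (fst (snd x)) (snd (snd x))) (fst (snd y)) (snd (snd y)))"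
  have "\<exists>f. \<forall>i. P i (f i) \<and> Q i (f i) (f (Suc i))"
  proof (rule dependent_nat_choice)
    show "\<exists>x. P 0 x" unfolding P_def by simp
    fix x i assume "P i x"
    obtain m c where "gens (fst (snd x)) (Ker (fst x) (fst (snd x)) (snd (snd x))) m c"
      using noeth_gens[OF noeth subm_Ker] by blast
    then have "P (Suc i) (fst (snd x), m, c) \<and> Q i x (fst (snd x), m, c)" unfolding P_def Q_def by simp
    then show "\<exists>y. P (Suc i) y \<and> Q i x y" by blast
  qed
  then obtain f where f: "\<And>i. P i (f i)" "\<And>i. Q i (f i) (f (Suc i))" by blast
  define n where "n = (\<lambda>i. fst (f i))"
  define d where "d = (\<lambda>i. snd (snd (f (i - 1))))"
  have f0: "f 0 = (n0, m1, c1)" using f(1)[of 0] unfolding P_def by simp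
  have nS: "\<And>i. n (Suc i) = fst (snd (f i))" using f(2) unfolding n_def Q_def by simp
  have "free_resolution s n d g"
    unfolding free_resolution_def
  proof (intro conjI allI impI)
    fix x show "\<exists>a. x = (\<Sum>j<n 0. s (a j) (g j))" using surj f0 by (simp add: n_def)
  next
    fix a
    have "n 0 = n0" "n 1 = m1" "d 1 = c1" using f0 nS[of 0] by (simp_all add: n_def d_def)
    then show "(\<Sum>j<n 0. s (a j) (g j)) = 0 \<longleftrightarrow> (\<exists>b. \<forall>k<n 0. a k = matvec (d 1) (n 1) b k)"
      using gens_exact[OF sK0 clK0 g1, where a=a] unfolding K0_def by simp
  next
    fix i :: nat and b assume i: "1 \<le> i"
    then obtain j where j: "i = Suc j" by (cases i) auto
    have Qj: "gens (n (Suc j)) (Ker (n j) (n (Suc j)) (d (Suc j))) (n (Suc (Suc j))) (d (Suc (Suc j)))"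
      using f(2)[of j] f(2)[of "Suc j"] unfolding Q_def by (simp add: nS n_def d_def)
    have "b \<in> Ker (n j) (n (Suc j)) (d (Suc j)) \<longleftrightarrow>
        (\<exists>c. \<forall>k<n (Suc j). b k = matvec (d (Suc (Suc j))) (n (Suc (Suc j))) c k)"
      by (rule gens_exact[OF subm_Ker _ Qj]) (rule Ker_cl, assumption+)
    then show "(\<forall>k<n (i - 1). matvec (d i) (n i) b k = 0) \<longleftrightarrow>
          (\<exists>c. \<forall>j<n i. b j = matvec (d (i + 1)) (n (i + 1)) c j)"
      unfolding Ker_def j by simp
  qed
  then show ?thesis by blast
qed

lemma dual_zero:
  fixes \<phi> :: "'d::ab_group_add \<Rightarrow> 'm \<Rightarrow> 'r::comm_ring_1"
  assumes "\<forall>a b x. \<phi> (a + b) x = \<phi> a x + \<phi> b x"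
  shows "\<phi> 0 x = 0"
proof -
  have "\<phi> 0 x = \<phi> (0 + 0) x" by simp
  then have "\<phi> 0 x = \<phi> 0 x + \<phi> 0 x" using assms by metis
  then have "\<phi> 0 x + \<phi> 0 x = \<phi> 0 x + 0" by simp
  then show "\<phi> 0 x = 0" by (rule add_left_imp_eq)
qed

lemma dual_fin_gen:
  fixes sM :: "'r::comm_ring_1 \<Rightarrow> 'm::ab_group_add \<Rightarrow> 'm"
    and sD :: "'r \<Rightarrow> 'd::ab_group_add \<Rightarrow> 'd"
  assumes noeth: "noetherian_ring TYPE('r)" and fg: "fin_gen sM" and mD: "module sD"
    and dual: "is_dual_via sM sD \<phi>"
  shows "fin_gen sD"
proof -
  interpret D: module sD by fact
  have ms: "module sM" using fg unfolding fin_gen_def by blast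
  have mt: "module ((*)::'r\<Rightarrow>'r\<Rightarrow>'r)" by (rule module_times)
  interpret MP: module_pair sM "(*)::'r\<Rightarrow>'r\<Rightarrow>'r" by (simp add: module_pair_def ms mt)
  have bij: "bij_betw \<phi> UNIV {f. module_hom sM ((*)::'r\<Rightarrow>'r\<Rightarrow>'r) f}"
    and padd: "\<forall>a b x. \<phi> (a + b) x = \<phi> a x + \<phi> b x"
    and psc: "\<forall>r a x. \<phi> (sD r a) x = r * \<phi> a x" using dual unfolding is_dual_via_def by auto
  have hom: "\<And>y. module_hom sM ((*)::'r\<Rightarrow>'r\<Rightarrow>'r) (\<phi> y)"
    using bij unfolding bij_betw_def by auto
  have inj: "inj \<phi>" using bij by (simp add: bij_betw_def)
  from fg obtain S where S: "finite S" "module.span sM S = UNIV" unfolding fin_gen_def by blast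
  obtain k :: nat and u where ku: "S = u ` {..<k}" "inj_on u {..<k}" using enum_finite[OF S(1)] by blast
  define psi where "psi = (\<lambda>y i. \<phi> y (u i))"
  define V where "V = range psi"
  have sV: "subm V" unfolding subm_def V_def
  proof (intro conjI ballI allI)
    show "(\<lambda>_. 0) \<in> range psi" by (rule image_eqI[of _ _ 0]) (auto simp: psi_def dual_zero[OF padd])
  next
    fix a b assume "a \<in> range psi" "b \<in> range psi"
    then obtain y z where "a = psi y" "b = psi z" by blast
    then show "(\<lambda>i. a i + b i) \<in> range psi"
      by (intro image_eqI[of _ _ "y + z"]) (auto simp: psi_def padd)
  next
    fix c a assume "a \<in> range psi"
    then obtain y where "a = psi y" by blast
    then show "(\<lambda>i. c * a i) \<in> range psi"
      by (intro image_eqI[of _ _ "sD c y"]) (auto simp: psi_def psc)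
  qed
  obtain m c where g: "gens k V m c" using noeth_gens[OF noeth sV] by blast
  have "\<forall>j. \<exists>x. j < m \<longrightarrow> (\<forall>i<k. c i j = psi x i)" using g unfolding gens_def V_def by blast
  from choice[OF this] obtain x where x: "\<forall>j. j < m \<longrightarrow> (\<forall>i<k. c i j = psi (x j) i)" by (elim exE)
  have "module.span sD (x ` {..<m}) = UNIV"
  proof (rule set_eqI, rule iffI)
    fix y :: 'd assume "y \<in> UNIV"
    have "psi y \<in> V" unfolding V_def by simp
    then obtain b where b: "\<forall>i<k. psi y i = matvec c m b i" using g unfolding gens_def by blast
    define z where "z = (\<Sum>j<m. sD (b j) (x j))"
    have z_in: "z \<in> module.span sD (x ` {..<m})"
      unfolding z_def by (intro D.span_sum D.span_scale D.span_base) auto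
    have agree: "\<And>v. v \<in> S \<Longrightarrow> \<phi> y v = \<phi> z v"
    proof -
      fix v assume "v \<in> S"
      then obtain i where i: "i < k" "v = u i" using ku(1) by auto
      have "\<phi> y v = matvec c m b i" using b i unfolding psi_def by simp
      also have "\<dots> = (\<Sum>j<m. b j * \<phi> (x j) (u i))"
        unfolding matvec_def using x i by (intro sum.cong) (auto simp: psi_def mult.commute)
      also have "\<dots> = \<phi> z v" unfolding z_def using dual_sum[OF padd psc] i by simp
      finally show "\<phi> y v = \<phi> z v" .
    qed
    have "\<phi> y = \<phi> z"
    proof
      fix v
      have "v \<in> module.span sM S" using S(2) by simp
      then show "\<phi> y v = \<phi> z v" using MP.module_hom_eq_on_span[OF hom hom agree] by blast
    qed
    then have "y = z" using injD[OF inj] by blast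
    then show "y \<in> module.span sD (x ` {..<m})" using z_in by simp
  qed simp
  then show ?thesis unfolding fin_gen_def using mD by blast
qed

lemma E_dsum:
  fixes s1 :: "'r::comm_ring_1 \<Rightarrow> 'm::ab_group_add \<Rightarrow> 'm" and s2 :: "'r \<Rightarrow> 'n::ab_group_add \<Rightarrow> 'n"
  assumes m1: "module s1" and m2: "module s2"
    and ex2: "\<exists>n' d' g'. free_resolution s2 n' d' g'"
    and sub: "stable_ann s1 \<subseteq> stable_ann s2" and E: "in_E s1"
  shows "in_E (dsum_scale s1 s2)"
proof -
  interpret M2: module s2 by fact
  have mt: "module ((*)::'r\<Rightarrow>'r\<Rightarrow>'r)" by (rule module_times)
  have mP: "module (dsum_scale s1 s2)" by (rule module_dsum[OF m1 m2])
  have mX: "module (dsum_scale s1 ((*)::'r\<Rightarrow>'r\<Rightarrow>'r))" by (rule module_dsum[OF m1 mt])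
  have mX': "module (dsum_scale (dsum_scale s1 s2) ((*)::'r\<Rightarrow>'r\<Rightarrow>'r))" by (rule module_dsum[OF mP mt])
  define \<iota> where "\<iota> = (\<lambda>(z::'m \<times> 'r). ((fst z, 0::'n), snd z))"
  define \<pi> where "\<pi> = (\<lambda>(z::('m \<times> 'n) \<times> 'r). (fst (fst z), snd z))"
  have hi: "module_hom (dsum_scale s1 ((*)::'r\<Rightarrow>'r\<Rightarrow>'r)) (dsum_scale (dsum_scale s1 s2) (*)) \<iota>"
    unfolding module_hom_iff using mX mX' by (simp add: \<iota>_def dsum_scale_def)
  have hp: "module_hom (dsum_scale (dsum_scale s1 s2) (*)) (dsum_scale s1 ((*)::'r\<Rightarrow>'r\<Rightarrow>'r)) \<pi>"
    unfolding module_hom_iff using mX mX' by (simp add: \<pi>_def dsum_scale_def)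
  have pi: "\<forall>z. \<pi> (\<iota> z) = z" by (simp add: \<pi>_def \<iota>_def)
  have "stable_ann (dsum_scale s1 s2) = ARann (dsum_scale s1 s2)"
  proof
    show "stable_ann (dsum_scale s1 s2) \<subseteq> ARann (dsum_scale s1 s2)"
      unfolding ARann_def using stable_ann_sub_ann_Ext[OF mP mX'] by blast
  next
    show "ARann (dsum_scale s1 s2) \<subseteq> stable_ann (dsum_scale s1 s2)"
    proof
      fix r assume r: "r \<in> ARann (dsum_scale s1 s2)"
      have "r \<in> ARann s1"
        unfolding ARann_def
      proof (rule InterI, clarify)
        fix i :: nat assume i: "0 < i"
        have "r \<in> ann_Ext i (dsum_scale s1 s2) (dsum_scale (dsum_scale s1 s2) (*))"
          using r i unfolding ARann_def by blast
        then show "r \<in> ann_Ext i s1 (dsum_scale s1 (*))"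
          using ann_Ext_dsum_sub[OF m1 m2 mX mX' hi hp pi i ex2] by blast
      qed
      then have "r \<in> stable_ann s1" using E unfolding in_E_def by simp
      then show "r \<in> stable_ann (dsum_scale s1 s2)"
        using stable_ann_dsum[OF m1 m2] sub by blast
    qed
  qed
  then show ?thesis unfolding in_E_def .
qed

theorem mainTheorem14:
  fixes sM :: "'r::comm_ring_1 \<Rightarrow> 'm::ab_group_add \<Rightarrow> 'm"
    and sN :: "'r \<Rightarrow> 'n::ab_group_add \<Rightarrow> 'n"
    and sD :: "'r \<Rightarrow> 'd::ab_group_add \<Rightarrow> 'd"
    and \<phi> :: "'d \<Rightarrow> 'm \<Rightarrow> 'r"
  assumes "noetherian_ring TYPE('r)" and "local_ring TYPE('r)"
    and "fin_gen sM" and "fin_gen sN"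
    and "module sD" and "is_dual_via sM sD \<phi>"
  shows "(stable_ann sM \<subseteq> stable_ann sN \<and> in_E sM \<longrightarrow> in_E (dsum_scale sM sN))
    \<and> (in_E sM \<longrightarrow> in_E (dsum_scale sM sD))"
proof -
  have mM: "module sM" using assms(3) unfolding fin_gen_def by blast
  have mN: "module sN" using assms(4) unfolding fin_gen_def by blast
  have exN: "\<exists>n' d' g'. free_resolution sN n' d' g'" by (rule fin_gen_res[OF assms(1,4)])
  have exD: "\<exists>n' d' g'. free_resolution sD n' d' g'"
    by (rule fin_gen_res[OF assms(1) dual_fin_gen[OF assms(1,3,5,6)]])
  have subD: "stable_ann sM \<subseteq> stable_ann sD" using stable_ann_dual[OF mM assms(5,6)] by blast
  show ?thesis
    using E_dsum[OF mM mN exN] E_dsum[OF mM assms(5) exD subD] by blast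
qed

end
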